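(* A metric $\tilde d_H$ on $\mathcal{K}^n\cup\{\emptyset\}$ (with values in $[0,\infty]$) is an extension of the Hausdorff metric $d_H$ satisfying $\tilde d_H(K+x,L+x)=\tilde d_H(K,L)$ for all $K,L\in\mathcal{K}^n\cup\{\emptyset\}$ and $x\in\mathbb{R}^n$ if and only if $\tilde d_H(K,L)=d_H(K,L)$ when $K\neq\emptyset\neq L$, $\tilde d_H(\emptyset,\emptyset)=0$, and $\tilde d_H(K,L)=+\infty$ when exactly one of $K,L$ is empty.
   Context: $\mathcal{K}^n$ is the set of non-empty compact convex subsets of $\mathbb{R}^n$, with Hausdorff metric $d_H$; $\emptyset+x=\emptyset$. An extension of $d_H$ is a metric $\tilde d_H:(\mathcal{K}^n\cup\{\emptyset\})\times(\mathcal{K}^n\cup\{\emptyset\})\to[0,\infty]$ with $\tilde d_H(K,L)=d_H(K,L)$ for all $K,L\in\mathcal{K}^n$. *)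

theory Defs
  imports "HOL-Analysis.Analysis" "HOL-Library.Extended_Nonnegative_Real"
begin

definition convex_bodies :: "'a::euclidean_space set set" where
  "convex_bodies = {K. K \<noteq> {} \<and> compact K \<and> convex K}"

definition hausdorff_dist :: "'a::metric_space set \<Rightarrow> 'a set \<Rightarrow> real" where
  "hausdorff_dist K L = max (SUP x\<in>K. infdist x L) (SUP y\<in>L. infdist y K)"

definition ext_metric_on :: "'b set \<Rightarrow> ('b \<Rightarrow> 'b \<Rightarrow> ennreal) \<Rightarrow> bool" where
  "ext_metric_on S d \<longleftrightarrow>
     (\<forall>x\<in>S. \<forall>y\<in>S. (d x y = 0 \<longleftrightarrow> x = y)) \<and>
     (\<forall>x\<in>S. \<forall>y\<in>S. d x y = d y x) \<and>
     (\<forall>x\<in>S. \<forall>y\<in>S. \<forall>z\<in>S. d x z \<le> d x y + d y z)"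

definition translate :: "'a::real_vector set \<Rightarrow> 'a \<Rightarrow> 'a set" where
  "translate K x = (\<lambda>y. y + x) ` K"

end

theory Submission
  imports Defs
begin

lemma infdist_translate:
  fixes y x :: "'a::real_normed_vector"
  shows "infdist (y + x) (translate L x) = infdist y L"
proof (cases "L = {}")
  case True then show ?thesis by (simp add: translate_def infdist_def)
next
  case False
  have "infdist (y + x) (translate L x) = (INF a\<in>L. dist (y + x) (a + x))"
    using False by (simp add: translate_def infdist_def image_comp o_def)
  also have "\<dots> = (INF a\<in>L. dist y a)" by (simp add: dist_norm)
  finally show ?thesis using False by (simp add: infdist_def)
qed

lemma hd_translate:
  fixes x :: "'a::real_normed_vector"
  shows "hausdorff_dist (translate K x) (translate L x) = hausdorff_dist K L"
proof -
  have a: "(SUP y\<in>translate K x. infdist y (translate L x)) = (SUP y\<in>K. infdist y L)"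
    by (simp add: translate_def image_comp o_def infdist_translate[unfolded translate_def])
  have b: "(SUP y\<in>translate L x. infdist y (translate K x)) = (SUP y\<in>L. infdist y K)"
    by (simp add: translate_def image_comp o_def infdist_translate[unfolded translate_def])
  show ?thesis unfolding hausdorff_dist_def a b ..
qed

lemma hd_sing:
  fixes a b :: "'a::metric_space"
  shows "hausdorff_dist {a} {b} = dist a b"
  by (simp add: hausdorff_dist_def dist_commute)

lemma translate_body:
  fixes K :: "'a::euclidean_space set"
  shows "K \<in> convex_bodies \<Longrightarrow> translate K x \<in> convex_bodies"
proof -
  have e: "(\<lambda>y. y + x) ` K = (+) x ` K" by (simp add: add.commute)
  assume "K \<in> convex_bodies" then show ?thesis
    unfolding convex_bodies_def translate_def e
    by (auto intro: compact_translation convex_translation)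
qed

lemma sing_body: "{a::'a::euclidean_space} \<in> convex_bodies"
  by (simp add: convex_bodies_def)

theorem lemma5p1:
  fixes d :: "'a::euclidean_space set \<Rightarrow> 'a set \<Rightarrow> ennreal"
  assumes "ext_metric_on (insert {} convex_bodies) d"
  shows "((\<forall>K\<in>convex_bodies. \<forall>L\<in>convex_bodies. d K L = ennreal (hausdorff_dist K L)) \<and>
          (\<forall>K\<in>insert {} convex_bodies. \<forall>L\<in>insert {} convex_bodies. \<forall>x.
              d (translate K x) (translate L x) = d K L))
     \<longleftrightarrow>
         ((\<forall>K\<in>convex_bodies. \<forall>L\<in>convex_bodies. d K L = ennreal (hausdorff_dist K L)) \<and>
          d {} {} = 0 \<and>
          (\<forall>K\<in>convex_bodies. d K {} = \<infinity> \<and> d {} K = \<infinity>))"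
proof
  have m0: "\<And>x y. x \<in> insert {} convex_bodies \<Longrightarrow> y \<in> insert {} convex_bodies \<Longrightarrow> d x y = 0 \<longleftrightarrow> x = y"
   and ms: "\<And>x y. x \<in> insert {} convex_bodies \<Longrightarrow> y \<in> insert {} convex_bodies \<Longrightarrow> d x y = d y x"
   and mt: "\<And>x y z. x \<in> insert {} convex_bodies \<Longrightarrow> y \<in> insert {} convex_bodies \<Longrightarrow> z \<in> insert {} convex_bodies \<Longrightarrow> d x z \<le> d x y + d y z"
    using assms unfolding ext_metric_on_def by blast+
  have e0: "d {} {} = 0" using m0 by blast
  {
    assume H: "(\<forall>K\<in>convex_bodies. \<forall>L\<in>convex_bodies. d K L = ennreal (hausdorff_dist K L)) \<and>
          (\<forall>K\<in>insert {} convex_bodies. \<forall>L\<in>insert {} convex_bodies. \<forall>x.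
              d (translate K x) (translate L x) = d K L)"
    have tr: "\<And>y. d {y} {} = d {0} {}"
    proof -
      fix y :: 'a
      have "d (translate {0} y) (translate {} y) = d {0} {}"
        using H sing_body by blast
      then show "d {y} {} = d {0} {}" by (simp add: translate_def)
    qed
    have inf0: "d {0::'a} {} = \<infinity>"
    proof (rule ccontr)
      assume "d {0::'a} {} \<noteq> \<infinity>"
      then obtain c where c: "d {0::'a} {} = ennreal c" "c \<ge> 0"
        by (cases "d {0::'a} {}" rule: ennreal_cases) auto
      obtain y :: 'a where ny: "norm y = 2 * c + 1"
        using vector_choose_size[of "2*c+1"] c(2) by auto
      have "d {0} {y} \<le> d {0} {} + d {} {y}"
        using mt[of "{0}" "{}" "{y}"] sing_body by blast
      also have "d {} {y} = d {0} {}" using ms[of "{}" "{y}"] sing_body[of y] tr[of y] by simp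
      finally have le: "d {0} {y} \<le> ennreal c + ennreal c" using c by simp
      have "d {0} {y} = ennreal (norm y)"
        proof -
        have "d {0} {y} = ennreal (hausdorff_dist {0} {y})"
          using H sing_body[of 0] sing_body[of y] by blast
        then show ?thesis using hd_sing[of "0::'a" y] by (simp add: dist_norm)
      qed
      then have "ennreal (norm y) \<le> ennreal (2*c)"
        using le c(2) by (simp add: ennreal_plus[symmetric] del: ennreal_plus)
      then have "norm y \<le> 2*c" using c(2) by (simp add: ennreal_le_iff)
      then show False using ny by simp
    qed
    have "\<forall>K\<in>convex_bodies. d K {} = \<infinity> \<and> d {} K = \<infinity>"
    proof
      fix K :: "'a set" assume K: "K \<in> convex_bodies"
      have "d {0} {} \<le> d {0} K + d K {}" using mt[of "{0}" K "{}"] K sing_body by blast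
      moreover have "d {0} K = ennreal (hausdorff_dist {0} K)" using H K sing_body by blast
      ultimately have "d K {} = \<infinity>" using inf0 by (simp add: top_unique)
      then show "d K {} = \<infinity> \<and> d {} K = \<infinity>" using ms[of K "{}"] K by simp
    qed
    then show "(\<forall>K\<in>convex_bodies. \<forall>L\<in>convex_bodies. d K L = ennreal (hausdorff_dist K L)) \<and>
          d {} {} = 0 \<and> (\<forall>K\<in>convex_bodies. d K {} = \<infinity> \<and> d {} K = \<infinity>)"
      using H e0 by blast
  }
  {
    assume H: "(\<forall>K\<in>convex_bodies. \<forall>L\<in>convex_bodies. d K L = ennreal (hausdorff_dist K L)) \<and>
          d {} {} = 0 \<and> (\<forall>K\<in>convex_bodies. d K {} = \<infinity> \<and> d {} K = \<infinity>)"
    have "\<forall>K\<in>insert {} convex_bodies. \<forall>L\<in>insert {} convex_bodies. \<forall>x.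
              d (translate K x) (translate L x) = d K L"
    proof (intro ballI allI)
      fix K L :: "'a set" and x :: 'a
      assume K: "K \<in> insert {} convex_bodies" and L: "L \<in> insert {} convex_bodies"
      have te: "translate {} x = {}" by (simp add: translate_def)
      show "d (translate K x) (translate L x) = d K L"
      proof (cases "K = {}")
        case True
        show ?thesis
        proof (cases "L = {}")
          case False
          then have Lb: "L \<in> convex_bodies" using L by simp
          then have "translate L x \<in> convex_bodies" by (rule translate_body)
          then show ?thesis using Lb H te True by simp
        qed (use True H te in simp)
      next
        case False
        then have Kb: "K \<in> convex_bodies" using K by simp
        show ?thesis
        proof (cases "L = {}")
          case True
          have "translate K x \<in> convex_bodies" using Kb by (rule translate_body)
          then show ?thesis using Kb H te True by simp
        next
          case False
          then have "L \<in> convex_bodies" using L by simp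
          then show ?thesis using Kb H translate_body hd_translate by metis
        qed
      qed
    qed
    then show "(\<forall>K\<in>convex_bodies. \<forall>L\<in>convex_bodies. d K L = ennreal (hausdorff_dist K L)) \<and>
          (\<forall>K\<in>insert {} convex_bodies. \<forall>L\<in>insert {} convex_bodies. \<forall>x.
              d (translate K x) (translate L x) = d K L)" using H by blast
  }
qed

end
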